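(* Prioritized planning is suboptimal for the flowtime objective in general for the class of P-solvable MAPF instances: there exists a P-solvable MAPF instance such that, for every priority ordering $\prec$, every solution consistent with $\prec$ has flowtime strictly greater than the minimum flowtime over all solutions of the instance.
   Context: A MAPF instance consists of a connected undirected graph $G=(V,E)$ and $M$ agents $a_1,\dots,a_M$; agent $a_i$ has a start vertex $s_i$ and a target vertex $t_i$, and start vertices are pairwise distinct, as are target vertices. Time is discrete; at each time step every agent either moves to an adjacent vertex or waits. A path for $a_i$ is a sequence $\pi_i=\langle \pi_i(0),\pi_i(1),\dots\rangle$ with $\pi_i(0)=s_i$, consecutive vertices equal or adjacent, and $\pi_i(t)=t_i$ for all $t\ge T_i$, where the arrival time $T_i$ is the least such time. Two agents collide if they occupy the same vertex at the same time, or traverse the same edge in opposite directions at the same time step. A solution is a collision-free set of paths, one per agent; its flowtime is $\sum_{i=1}^M T_i$. A priority ordering is a strict partial order $\prec$ on $\{1,\dots,M\}$ ($a_i$ has higher priority than $a_j$ iff $i\prec j$). A solution $\{\pi_i\}$ is consistent with $\prec$ if for every $i$ the arrival time of $\pi_i$ equals the minimum arrival time over all paths for $a_i$ that do not collide with any $\pi_k$ with $k\prec i$ (higher priority agents never wait for lower priority agents). A MAPF instance is P-solvable iff it has a solution consistent with some priority ordering. *)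

theory Defs
  imports Main
begin

definition mapf_instance ::
  "'v set \<Rightarrow> ('v \<Rightarrow> 'v \<Rightarrow> bool) \<Rightarrow> nat \<Rightarrow> (nat \<Rightarrow> 'v) \<Rightarrow> (nat \<Rightarrow> 'v) \<Rightarrow> bool" where
  "mapf_instance V E M s t \<longleftrightarrow>
     finite V \<and>
     (\<forall>u w. E u w \<longrightarrow> u \<in> V \<and> w \<in> V) \<and>
     (\<forall>u w. E u w \<longrightarrow> E w u) \<and>
     (\<forall>u. \<not> E u u) \<and>
     (\<forall>u\<in>V. \<forall>w\<in>V. E\<^sup>*\<^sup>* u w) \<and>
     (\<forall>i<M. s i \<in> V \<and> t i \<in> V) \<and>
     inj_on s {..<M} \<and> inj_on t {..<M}"

definition is_path :: "'v set \<Rightarrow> ('v \<Rightarrow> 'v \<Rightarrow> bool) \<Rightarrow> 'v \<Rightarrow> 'v \<Rightarrow> (nat \<Rightarrow> 'v) \<Rightarrow> bool" where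
  "is_path V E a b \<pi> \<longleftrightarrow>
     \<pi> 0 = a \<and> (\<forall>n. \<pi> n \<in> V) \<and>
     (\<forall>n. \<pi> (Suc n) = \<pi> n \<or> E (\<pi> n) (\<pi> (Suc n))) \<and>
     (\<exists>T. \<forall>n\<ge>T. \<pi> n = b)"

definition arrival :: "'v \<Rightarrow> (nat \<Rightarrow> 'v) \<Rightarrow> nat" where
  "arrival b \<pi> = (LEAST T. \<forall>n\<ge>T. \<pi> n = b)"

definition collide :: "(nat \<Rightarrow> 'v) \<Rightarrow> (nat \<Rightarrow> 'v) \<Rightarrow> bool" where
  "collide p q \<longleftrightarrow>
     (\<exists>n. p n = q n \<or>
          (p n \<noteq> p (Suc n) \<and> p n = q (Suc n) \<and> p (Suc n) = q n))"

definition is_solution ::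
  "'v set \<Rightarrow> ('v \<Rightarrow> 'v \<Rightarrow> bool) \<Rightarrow> nat \<Rightarrow> (nat \<Rightarrow> 'v) \<Rightarrow> (nat \<Rightarrow> 'v) \<Rightarrow> (nat \<Rightarrow> nat \<Rightarrow> 'v) \<Rightarrow> bool" where
  "is_solution V E M s t sol \<longleftrightarrow>
     (\<forall>i<M. is_path V E (s i) (t i) (sol i)) \<and>
     (\<forall>i<M. \<forall>j<M. i \<noteq> j \<longrightarrow> \<not> collide (sol i) (sol j))"

definition flowtime :: "nat \<Rightarrow> (nat \<Rightarrow> 'v) \<Rightarrow> (nat \<Rightarrow> nat \<Rightarrow> 'v) \<Rightarrow> nat" where
  "flowtime M t sol = (\<Sum>i<M. arrival (t i) (sol i))"

definition min_flowtime ::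
  "'v set \<Rightarrow> ('v \<Rightarrow> 'v \<Rightarrow> bool) \<Rightarrow> nat \<Rightarrow> (nat \<Rightarrow> 'v) \<Rightarrow> (nat \<Rightarrow> 'v) \<Rightarrow> nat" where
  "min_flowtime V E M s t =
     (LEAST f. \<exists>sol. is_solution V E M s t sol \<and> flowtime M t sol = f)"

text \<open>A priority ordering: strict partial order on the agents {0..<M};
  prec k i means agent k has higher priority than agent i.\<close>

definition priority_ordering :: "nat \<Rightarrow> (nat \<Rightarrow> nat \<Rightarrow> bool) \<Rightarrow> bool" where
  "priority_ordering M prec \<longleftrightarrow>
     (\<forall>i j. prec i j \<longrightarrow> i < M \<and> j < M) \<and>
     (\<forall>i. \<not> prec i i) \<and>
     (\<forall>i j k. prec i j \<longrightarrow> prec j k \<longrightarrow> prec i k)"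

definition consistent ::
  "'v set \<Rightarrow> ('v \<Rightarrow> 'v \<Rightarrow> bool) \<Rightarrow> nat \<Rightarrow> (nat \<Rightarrow> 'v) \<Rightarrow> (nat \<Rightarrow> 'v) \<Rightarrow>
   (nat \<Rightarrow> nat \<Rightarrow> bool) \<Rightarrow> (nat \<Rightarrow> nat \<Rightarrow> 'v) \<Rightarrow> bool" where
  "consistent V E M s t prec sol \<longleftrightarrow>
     is_solution V E M s t sol \<and>
     (\<forall>i<M. arrival (t i) (sol i) =
        (LEAST T. \<exists>\<pi>. is_path V E (s i) (t i) \<pi> \<and>
                       (\<forall>k<M. prec k i \<longrightarrow> \<not> collide \<pi> (sol k)) \<and>
                       arrival (t i) \<pi> = T))"

definition P_solvable ::
  "'v set \<Rightarrow> ('v \<Rightarrow> 'v \<Rightarrow> bool) \<Rightarrow> nat \<Rightarrow> (nat \<Rightarrow> 'v) \<Rightarrow> (nat \<Rightarrow> 'v) \<Rightarrow> bool" where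
  "P_solvable V E M s t \<longleftrightarrow>
     (\<exists>prec sol. priority_ordering M prec \<and> consistent V E M s t prec sol)"

end

theory Submission
  imports Defs
begin

definition GV :: "nat set" where "GV = {0,1,2,3,4,5,6}"

definition GE :: "nat \<Rightarrow> nat \<Rightarrow> bool" where
  "GE u w \<longleftrightarrow> (u,w) \<in> {(0,1),(1,0),(0,3),(3,0),(0,4),(4,0),(1,2),(2,1),(2,5),(5,2),(2,6),(6,2)}"

definition Gs :: "nat \<Rightarrow> nat" where "Gs i = (if i = 0 then 1 else 3)"
definition Gt :: "nat \<Rightarrow> nat" where "Gt i = (if i = 0 then 0 else 5)"

definition q1 :: "nat \<Rightarrow> nat" where
  "q1 n = (if n = 0 then 3 else if n = 1 then 0 else if n = 2 then 1 else if n = 3 then 2 else 5)"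

definition q0 :: "nat \<Rightarrow> nat" where
  "q0 n = (if n = 0 then 1 else if n = 1 then 2 else if n = 2 then 6 else if n = 3 then 6
           else if n = 4 then 2 else if n = 5 then 1 else 0)"

definition o0 :: "nat \<Rightarrow> nat" where
  "o0 n = (if n = 0 then 1 else if n = 1 then 0 else if n = 2 then 4 else 0)"

definition o1 :: "nat \<Rightarrow> nat" where
  "o1 n = (if n \<le> 1 then 3 else if n = 2 then 0 else if n = 3 then 1 else if n = 4 then 2 else 5)"

lemma path_step: "is_path V E a b \<pi> \<Longrightarrow> \<pi> (Suc n) = \<pi> n \<or> E (\<pi> n) (\<pi> (Suc n))"
  unfolding is_path_def by blast

lemma path_arrival: "is_path V E a b \<pi> \<Longrightarrow> n \<ge> arrival b \<pi> \<Longrightarrow> \<pi> n = b"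
proof -
  assume P: "is_path V E a b \<pi>" and N: "n \<ge> arrival b \<pi>"
  from P have ex: "\<exists>T. \<forall>n\<ge>T. \<pi> n = b" unfolding is_path_def by blast
  have "\<forall>m\<ge>(LEAST T. \<forall>n\<ge>T. \<pi> n = b). \<pi> m = b" by (rule LeastI_ex[OF ex])
  then show ?thesis using N unfolding arrival_def by blast
qed

lemma arrival_le: "\<forall>n\<ge>T. \<pi> n = b \<Longrightarrow> arrival b \<pi> \<le> T"
  unfolding arrival_def by (simp add: Least_le)

lemma arrival_eq: "\<forall>n\<ge>T. \<pi> n = b \<Longrightarrow> \<pi> (T - 1) \<noteq> b \<Longrightarrow> arrival b \<pi> = T"
  unfolding arrival_def
proof (rule Least_equality)
  assume a: "\<forall>n\<ge>T. \<pi> n = b" "\<pi> (T - 1) \<noteq> b"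
  show "\<forall>n\<ge>T. \<pi> n = b" by (rule a(1))
  fix y assume "\<forall>n\<ge>y. \<pi> n = b"
  then show "T \<le> y"
  proof -
    assume y: "\<forall>n\<ge>y. \<pi> n = b"
    show "T \<le> y"
    proof (rule ccontr)
      assume "\<not> T \<le> y"
      then have "y \<le> T - 1" by simp
      then show False using y a(2) by blast
    qed
  qed
qed

lemma nocoll: "\<not> collide p q \<Longrightarrow> p n \<noteq> q n \<and> \<not> (p n \<noteq> p (Suc n) \<and> p n = q (Suc n) \<and> p (Suc n) = q n)"
  unfolding collide_def by blast


lemma stepn: "is_path V E a b \<pi> \<Longrightarrow> \<pi> (n+1) = \<pi> n \<or> E (\<pi> n) (\<pi> (n+1))"
  using path_step[of V E a b \<pi> n] by simp

lemma nocolln: "\<not> collide p q \<Longrightarrow> p n \<noteq> q n \<and> \<not> (p n \<noteq> p (n+1) \<and> p n = q (n+1) \<and> p (n+1) = q n)"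
  using nocoll[of p q n] by simp

lemma stepk: "is_path V E a b \<pi> \<Longrightarrow> m = Suc k \<Longrightarrow> \<pi> m = \<pi> k \<or> E (\<pi> k) (\<pi> m)"
  using path_step[of V E a b \<pi> k] by simp

lemma nocollk: "\<not> collide p q \<Longrightarrow> m = Suc k \<Longrightarrow> p k \<noteq> q k \<and> \<not> (p k \<noteq> p m \<and> p k = q m \<and> p m = q k)"
  using nocoll[of p q k] by simp

lemma A1_forced:
  assumes P: "is_path GV GE 3 5 \<pi>" and A: "arrival 5 \<pi> \<le> 4"
  shows "\<pi> n = q1 n"
proof -
  have z: "\<pi> 0 = 3" using P unfolding is_path_def by blast
  have tl: "\<And>n. n \<ge> 4 \<Longrightarrow> \<pi> n = 5" using path_arrival[OF P] A by force
  have s0: "\<pi> 1 = \<pi> 0 \<or> GE (\<pi> 0) (\<pi> 1)" using stepk[OF P, where m=1 and k=0] by simp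
  have s1: "\<pi> 2 = \<pi> 1 \<or> GE (\<pi> 1) (\<pi> 2)" using stepk[OF P, where m=2 and k=1] by simp
  have s2: "\<pi> 3 = \<pi> 2 \<or> GE (\<pi> 2) (\<pi> 3)" using stepk[OF P, where m=3 and k=2] by simp
  have s3: "\<pi> 4 = \<pi> 3 \<or> GE (\<pi> 3) (\<pi> 4)" using stepk[OF P, where m=4 and k=3] by simp
  have p1: "\<pi> 1 = 3 \<or> \<pi> 1 = 0" using s0 z by (auto simp: GE_def)
  have p2: "\<pi> 2 \<in> {3,0,1,4}" using s1 p1 by (auto simp: GE_def)
  have p3: "\<pi> 3 = 2" using s2 s3 p2 tl[of 4] by (auto simp: GE_def)
  have p2': "\<pi> 2 = 1" using s2 p2 p3 by (auto simp: GE_def)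
  have p1': "\<pi> 1 = 0" using s1 p1 p2' by (auto simp: GE_def)
  have "n = 0 \<or> n = 1 \<or> n = 2 \<or> n = 3 \<or> n \<ge> 4" by arith
  then show ?thesis
  proof (elim disjE)
    assume "n \<ge> 4" then show ?thesis using tl[of n] by (simp add: q1_def)
  next
    assume "n = 1" then show ?thesis using p1' by (simp add: q1_def)
  qed (simp_all add: q1_def z p2' p3)
qed

lemma A0_bound:
  assumes P: "is_path GV GE 1 0 \<pi>" and C: "\<not> collide \<pi> q1"
  shows "\<pi> 5 \<noteq> 0"
proof -
  have z: "\<pi> 0 = 1" using P unfolding is_path_def by blast
  have s: "\<And>n. \<pi> (n+1) = \<pi> n \<or> GE (\<pi> n) (\<pi> (n+1))" using stepn[OF P] by blast
  have c: "\<And>n. \<pi> n \<noteq> q1 n \<and> \<not> (\<pi> n \<noteq> \<pi> (n+1) \<and> \<pi> n = q1 (n+1) \<and> \<pi> (n+1) = q1 n)"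
    using nocolln[OF C] by blast
  have p1: "\<pi> 1 \<in> {1,2}" using stepk[OF P, where m=1 and k=0] nocollk[OF C, where m=1 and k=0] nocollk[OF C, where m=2 and k=1] z by (auto simp: GE_def q1_def)
  have p2: "\<pi> 2 \<in> {2,5,6}" using stepk[OF P, where m=2 and k=1] nocollk[OF C, where m=2 and k=1] nocollk[OF C, where m=3 and k=2] p1 by (auto simp: GE_def q1_def)
  have p3: "\<pi> 3 \<in> {5,6}" using stepk[OF P, where m=3 and k=2] nocollk[OF C, where m=3 and k=2] nocollk[OF C, where m=4 and k=3] p2 by (auto simp: GE_def q1_def)
  have p4: "\<pi> 4 \<in> {2,6}" using stepk[OF P, where m=4 and k=3] nocollk[OF C, where m=4 and k=3] nocollk[OF C, where m=5 and k=4] p3 by (auto simp: GE_def q1_def)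
  have p5: "\<pi> 5 \<in> {1,2,6}" using stepk[OF P, where m=5 and k=4] nocollk[OF C, where m=5 and k=4] nocollk[OF C, where m=6 and k=5] p4 by (auto simp: GE_def q1_def)
  then show ?thesis by auto
qed

lemma A0_block:
  assumes P0: "is_path GV GE 1 0 \<pi>0" and A: "arrival 0 \<pi>0 \<le> 1"
    and P1: "is_path GV GE 3 5 \<pi>1" and C: "\<not> collide \<pi>1 \<pi>0"
  shows False
proof -
  have t0: "\<And>n. n \<ge> 1 \<Longrightarrow> \<pi>0 n = 0" using path_arrival[OF P0] A by force
  have c: "\<And>n. \<pi>1 n \<noteq> \<pi>0 n" using nocolln[OF C] by blast
  have "\<pi>1 n = 3" for n
  proof (induction n)
    case 0 then show ?case using P1 unfolding is_path_def by blast
  next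
    case (Suc n)
    then show ?case using stepn[OF P1, of n] c[of "n+1"] t0[of "n+1"] by (auto simp: GE_def)
  qed
  moreover obtain T where "\<forall>n\<ge>T. \<pi>1 n = 5" using P1 unfolding is_path_def by blast
  ultimately show False by auto
qed


lemma concrete_path:
  assumes "\<pi> 0 = a" "\<forall>n<N. \<pi> n \<in> V \<and> (\<pi> (Suc n) = \<pi> n \<or> E (\<pi> n) (\<pi> (Suc n)))"
    "\<forall>n\<ge>N. \<pi> n = b" "b \<in> V"
  shows "is_path V E a b \<pi>"
  unfolding is_path_def
proof (intro conjI allI)
  show "\<pi> 0 = a" by (rule assms(1))
  fix n
  show "\<pi> n \<in> V" using assms by (cases "n < N") auto
  show "\<pi> (Suc n) = \<pi> n \<or> E (\<pi> n) (\<pi> (Suc n))" using assms by (cases "n < N") auto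
next
  show "\<exists>T. \<forall>n\<ge>T. \<pi> n = b" using assms(3) by blast
qed

lemma nocoll_intro:
  assumes "\<forall>n<N. p n \<noteq> q n \<and> \<not> (p n \<noteq> p (Suc n) \<and> p n = q (Suc n) \<and> p (Suc n) = q n)"
    "\<forall>n\<ge>N. p n = b" "\<forall>n\<ge>N. q n = c" "b \<noteq> c"
  shows "\<not> collide p q"
  unfolding collide_def
proof
  assume "\<exists>n. p n = q n \<or> p n \<noteq> p (Suc n) \<and> p n = q (Suc n) \<and> p (Suc n) = q n"
  then obtain n where h: "p n = q n \<or> p n \<noteq> p (Suc n) \<and> p n = q (Suc n) \<and> p (Suc n) = q n" by blast
  show False
  proof (cases "n < N")
    case True then show False using assms(1) h by blast
  next
    case False then show False using assms(2-4) h by auto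
  qed
qed

lemma lt7: "(n::nat) < 7 \<Longrightarrow> n = 0 \<or> n = 1 \<or> n = 2 \<or> n = 3 \<or> n = 4 \<or> n = 5 \<or> n = 6" by arith

lemma q0_path: "is_path GV GE 1 0 q0"
  apply (rule concrete_path[where N=7])
  apply (simp add: q0_def)
  apply (intro allI impI, drule lt7, elim disjE; simp add: q0_def GE_def GV_def)
  apply (simp add: q0_def)
  apply (simp add: GV_def)
  done

lemma q1_path: "is_path GV GE 3 5 q1"
  apply (rule concrete_path[where N=7])
  apply (simp add: q1_def)
  apply (intro allI impI, drule lt7, elim disjE; simp add: q1_def GE_def GV_def)
  apply (simp add: q1_def)
  apply (simp add: GV_def)
  done

lemma o0_path: "is_path GV GE 1 0 o0"
  apply (rule concrete_path[where N=7])
  apply (simp add: o0_def)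
  apply (intro allI impI, drule lt7, elim disjE; simp add: o0_def GE_def GV_def)
  apply (simp add: o0_def)
  apply (simp add: GV_def)
  done

lemma o1_path: "is_path GV GE 3 5 o1"
  apply (rule concrete_path[where N=7])
  apply (simp add: o1_def)
  apply (intro allI impI, drule lt7, elim disjE; simp add: o1_def GE_def GV_def)
  apply (simp add: o1_def)
  apply (simp add: GV_def)
  done

lemma q01: "\<not> collide q0 q1"
  apply (rule nocoll_intro[where N=7 and b=0 and c=5])
  apply (intro allI impI, drule lt7, elim disjE; simp add: q0_def q1_def)
  apply (simp_all add: q0_def q1_def)
  done

lemma q10: "\<not> collide q1 q0"
  apply (rule nocoll_intro[where N=7 and b=5 and c=0])
  apply (intro allI impI, drule lt7, elim disjE; simp add: q0_def q1_def)
  apply (simp_all add: q0_def q1_def)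
  done

lemma o01: "\<not> collide o0 o1"
  apply (rule nocoll_intro[where N=7 and b=0 and c=5])
  apply (intro allI impI, drule lt7, elim disjE; simp add: o0_def o1_def)
  apply (simp_all add: o0_def o1_def)
  done

lemma o10: "\<not> collide o1 o0"
  apply (rule nocoll_intro[where N=7 and b=5 and c=0])
  apply (intro allI impI, drule lt7, elim disjE; simp add: o0_def o1_def)
  apply (simp_all add: o0_def o1_def)
  done

lemma arr_q0: "arrival 0 q0 = 6" by (rule arrival_eq) (auto simp: q0_def)
lemma arr_q1: "arrival 5 q1 = 4" by (rule arrival_eq) (auto simp: q1_def)
lemma arr_o0: "arrival 0 o0 = 3" by (rule arrival_eq) (auto simp: o0_def)
lemma arr_o1: "arrival 5 o1 = 5" by (rule arrival_eq) (auto simp: o1_def)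

definition z0 :: "nat \<Rightarrow> nat" where "z0 n = (if n = 0 then 1 else 0)"

lemma z0_path: "is_path GV GE 1 0 z0"
  apply (rule concrete_path[where N=1])
  apply (simp_all add: z0_def GE_def GV_def)
  done

lemma arr_z0: "arrival 0 z0 = 1" by (rule arrival_eq) (auto simp: z0_def)

lemma ch: "GE a b \<Longrightarrow> GE\<^sup>*\<^sup>* b c \<Longrightarrow> GE\<^sup>*\<^sup>* a c"
  by (rule converse_rtranclp_into_rtranclp)

lemma conn0: "u \<in> GV \<Longrightarrow> GE\<^sup>*\<^sup>* u 0 \<and> GE\<^sup>*\<^sup>* 0 u"
proof -
  have e: "\<And>a b. GE a b \<Longrightarrow> GE\<^sup>*\<^sup>* a b" by (rule r_into_rtranclp)
  have g10: "GE\<^sup>*\<^sup>* 1 0" "GE\<^sup>*\<^sup>* 0 1" "GE\<^sup>*\<^sup>* 3 0" "GE\<^sup>*\<^sup>* 0 3" "GE\<^sup>*\<^sup>* 4 0" "GE\<^sup>*\<^sup>* 0 4"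
    by (rule e, simp add: GE_def)+
  have g2: "GE\<^sup>*\<^sup>* 2 0" using ch[of 2 1 0] g10 by (simp add: GE_def)
  have g2': "GE\<^sup>*\<^sup>* 0 2" using rtranclp.rtrancl_into_rtrancl[of GE 0 1 2] g10 by (simp add: GE_def)
  have g5: "GE\<^sup>*\<^sup>* 5 0" using ch[of 5 2 0] g2 by (simp add: GE_def)
  have g5': "GE\<^sup>*\<^sup>* 0 5" using rtranclp.rtrancl_into_rtrancl[of GE 0 2 5] g2' by (simp add: GE_def)
  have g6: "GE\<^sup>*\<^sup>* 6 0" using ch[of 6 2 0] g2 by (simp add: GE_def)
  have g6': "GE\<^sup>*\<^sup>* 0 6" using rtranclp.rtrancl_into_rtrancl[of GE 0 2 6] g2' by (simp add: GE_def)
  assume "u \<in> GV"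
  then show ?thesis using g10 g2 g2' g5 g5' g6 g6' by (auto simp: GV_def)
qed

lemma inst: "mapf_instance GV GE 2 Gs Gt"
  unfolding mapf_instance_def
proof (intro conjI)
  show "finite GV" by (simp add: GV_def)
  show "\<forall>u w. GE u w \<longrightarrow> u \<in> GV \<and> w \<in> GV" by (auto simp: GE_def GV_def)
  show "\<forall>u w. GE u w \<longrightarrow> GE w u" by (auto simp: GE_def)
  show "\<forall>u. \<not> GE u u" by (auto simp: GE_def)
  show "\<forall>u\<in>GV. \<forall>w\<in>GV. GE\<^sup>*\<^sup>* u w"
  proof (intro ballI)
    fix u w assume "u \<in> GV" "w \<in> GV"
    then show "GE\<^sup>*\<^sup>* u w" using conn0[of u] conn0[of w] rtranclp_trans[of GE u 0 w] by blast
  qed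
  show "\<forall>i<2. Gs i \<in> GV \<and> Gt i \<in> GV" by (auto simp: Gs_def Gt_def GV_def)
  show "inj_on Gs {..<2}" by (auto simp: inj_on_def Gs_def)
  show "inj_on Gt {..<2}" by (auto simp: inj_on_def Gt_def)
qed


definition pr1 :: "nat \<Rightarrow> nat \<Rightarrow> bool" where "pr1 k i \<longleftrightarrow> k = 1 \<and> i = 0"
definition solq :: "nat \<Rightarrow> nat \<Rightarrow> nat" where "solq i = (if i = 0 then q0 else q1)"
definition solo :: "nat \<Rightarrow> nat \<Rightarrow> nat" where "solo i = (if i = 0 then o0 else o1)"

lemma lt2: "(i::nat) < 2 \<longleftrightarrow> i = 0 \<or> i = 1" by arith

lemma solq_sol: "is_solution GV GE 2 Gs Gt solq"
  unfolding is_solution_def lt2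
  using q0_path q1_path q01 q10 by (auto simp: solq_def Gs_def Gt_def)

lemma solo_sol: "is_solution GV GE 2 Gs Gt solo"
  unfolding is_solution_def lt2
  using o0_path o1_path o01 o10 by (auto simp: solo_def Gs_def Gt_def)

lemma flow2: "flowtime 2 Gt sol = arrival 0 (sol 0) + arrival 5 (sol 1)"
  unfolding flowtime_def by (simp add: numeral_2_eq_2 Gt_def)

lemma minflow: "min_flowtime GV GE 2 Gs Gt \<le> 8"
proof -
  have "flowtime 2 Gt solo = 8" using arr_o0 arr_o1 by (simp add: flow2 solo_def)
  then have "\<exists>sol. is_solution GV GE 2 Gs Gt sol \<and> flowtime 2 Gt sol = 8" using solo_sol by blast
  then show ?thesis unfolding min_flowtime_def by (rule Least_le)
qed

lemma A1_arr: "is_path GV GE 3 5 \<pi> \<Longrightarrow> arrival 5 \<pi> \<le> 4 \<Longrightarrow> arrival 5 \<pi> = 4"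
proof -
  assume P: "is_path GV GE 3 5 \<pi>" and A: "arrival 5 \<pi> \<le> 4"
  have "\<pi> 3 = 2" using A1_forced[OF P A, of 3] by (simp add: q1_def)
  then have "\<not> arrival 5 \<pi> \<le> 3" using path_arrival[OF P, of 3] by auto
  then show ?thesis using A by simp
qed

lemma psolv: "P_solvable GV GE 2 Gs Gt"
  unfolding P_solvable_def
proof (intro exI conjI)
  show "priority_ordering 2 pr1" by (auto simp: priority_ordering_def pr1_def)
  show "consistent GV GE 2 Gs Gt pr1 solq"
    unfolding consistent_def
  proof (intro conjI allI impI)
    show "is_solution GV GE 2 Gs Gt solq" by (rule solq_sol)
    fix i :: nat assume "i < 2"
    then consider "i = 0" | "i = 1" by arith
    then show "arrival (Gt i) (solq i) =
        (LEAST T. \<exists>\<pi>. is_path GV GE (Gs i) (Gt i) \<pi> \<and>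
                       (\<forall>k<2. pr1 k i \<longrightarrow> \<not> collide \<pi> (solq k)) \<and>
                       arrival (Gt i) \<pi> = T)"
    proof cases
      case 1
      have "(LEAST T. \<exists>\<pi>. is_path GV GE 1 0 \<pi> \<and>
                       (\<forall>k<2. pr1 k 0 \<longrightarrow> \<not> collide \<pi> (solq k)) \<and>
                       arrival 0 \<pi> = T) = 6"
      proof (rule Least_equality)
        show "\<exists>\<pi>. is_path GV GE 1 0 \<pi> \<and> (\<forall>k<2. pr1 k 0 \<longrightarrow> \<not> collide \<pi> (solq k)) \<and> arrival 0 \<pi> = 6"
          using q0_path q01 arr_q0 by (auto simp: pr1_def solq_def)
        fix y assume "\<exists>\<pi>. is_path GV GE 1 0 \<pi> \<and> (\<forall>k<2. pr1 k 0 \<longrightarrow> \<not> collide \<pi> (solq k)) \<and> arrival 0 \<pi> = y"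
        then obtain \<pi> where P: "is_path GV GE 1 0 \<pi>" and C: "\<not> collide \<pi> q1" and Y: "arrival 0 \<pi> = y"
          by (auto simp: pr1_def solq_def)
        show "6 \<le> y"
        proof (rule ccontr)
          assume "\<not> 6 \<le> y"
          then have "\<pi> 5 = 0" using path_arrival[OF P, of 5] Y by auto
          then show False using A0_bound[OF P C] by simp
        qed
      qed
      then show ?thesis using 1 arr_q0 by (simp add: Gs_def Gt_def solq_def)
    next
      case 2
      have "(LEAST T. \<exists>\<pi>. is_path GV GE 3 5 \<pi> \<and>
                       (\<forall>k<2. pr1 k 1 \<longrightarrow> \<not> collide \<pi> (solq k)) \<and>
                       arrival 5 \<pi> = T) = 4"
      proof (rule Least_equality)
        show "\<exists>\<pi>. is_path GV GE 3 5 \<pi> \<and> (\<forall>k<2. pr1 k 1 \<longrightarrow> \<not> collide \<pi> (solq k)) \<and> arrival 5 \<pi> = 4"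
          using q1_path arr_q1 by (auto simp: pr1_def)
        fix y assume "\<exists>\<pi>. is_path GV GE 3 5 \<pi> \<and> (\<forall>k<2. pr1 k 1 \<longrightarrow> \<not> collide \<pi> (solq k)) \<and> arrival 5 \<pi> = y"
        then obtain \<pi> where P: "is_path GV GE 3 5 \<pi>" and Y: "arrival 5 \<pi> = y" by blast
        show "4 \<le> y"
        proof (rule ccontr)
          assume "\<not> 4 \<le> y"
          then show False using A1_arr[OF P] Y by simp
        qed
      qed
      then show ?thesis using 2 arr_q1 by (simp add: Gs_def Gt_def solq_def)
    qed
  qed
qed

lemma main_bound:
  assumes PO: "priority_ordering 2 prec" and CO: "consistent GV GE 2 Gs Gt prec sol"
  shows "flowtime 2 Gt sol > 8"
proof -
  have S: "is_solution GV GE 2 Gs Gt sol" using CO unfolding consistent_def by blast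
  have PP: "\<And>i. i < 2 \<Longrightarrow> is_path GV GE (Gs i) (Gt i) (sol i)"
    using S unfolding is_solution_def by blast
  have P0: "is_path GV GE 1 0 (sol 0)" using PP[of 0] by (simp add: Gs_def Gt_def)
  have P1: "is_path GV GE 3 5 (sol 1)" using PP[of 1] by (simp add: Gs_def Gt_def)
  have C01: "\<not> collide (sol 0) (sol 1)" and C10: "\<not> collide (sol 1) (sol 0)"
    using S unfolding is_solution_def by auto
  have irr: "\<And>i. \<not> prec i i" using PO unfolding priority_ordering_def by blast
  have tr: "\<And>i j k. prec i j \<Longrightarrow> prec j k \<Longrightarrow> prec i k" using PO unfolding priority_ordering_def by blast
  have H: "\<And>i. i < 2 \<Longrightarrow> arrival (Gt i) (sol i) = (LEAST T. \<exists>\<pi>. is_path GV GE (Gs i) (Gt i) \<pi> \<and>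
                       (\<forall>k<2. prec k i \<longrightarrow> \<not> collide \<pi> (sol k)) \<and> arrival (Gt i) \<pi> = T)"
    using CO unfolding consistent_def by blast
  have L0: "arrival 0 (sol 0) = (LEAST T. \<exists>\<pi>. is_path GV GE 1 0 \<pi> \<and>
                       (\<forall>k<2. prec k 0 \<longrightarrow> \<not> collide \<pi> (sol k)) \<and> arrival 0 \<pi> = T)"
    using H[of 0] by (simp add: Gs_def Gt_def)
  have L1: "arrival 5 (sol 1) = (LEAST T. \<exists>\<pi>. is_path GV GE 3 5 \<pi> \<and>
                       (\<forall>k<2. prec k 1 \<longrightarrow> \<not> collide \<pi> (sol k)) \<and> arrival 5 \<pi> = T)"
    using H[of 1] by (simp add: Gs_def Gt_def)
  show ?thesis
  proof (cases "prec 1 0")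
    case False
    have "\<exists>\<pi>. is_path GV GE 1 0 \<pi> \<and> (\<forall>k<2. prec k 0 \<longrightarrow> \<not> collide \<pi> (sol k)) \<and> arrival 0 \<pi> = 1"
      using z0_path arr_z0 False irr by (auto simp: lt2)
    then have "arrival 0 (sol 0) \<le> 1" unfolding L0 by (rule Least_le)
    then show ?thesis using A0_block[OF P0 _ P1 C10] by blast
  next
    case True
    then have "\<not> prec 0 1" using irr tr by blast
    then have "\<exists>\<pi>. is_path GV GE 3 5 \<pi> \<and> (\<forall>k<2. prec k 1 \<longrightarrow> \<not> collide \<pi> (sol k)) \<and> arrival 5 \<pi> = 4"
      using q1_path arr_q1 irr by (auto simp: lt2)
    then have A1: "arrival 5 (sol 1) \<le> 4" unfolding L1 by (rule Least_le)
    then have "sol 1 = q1" using A1_forced[OF P1] by blast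
    then have "sol 0 5 \<noteq> 0" using A0_bound[OF P0] C01 by simp
    then have "\<not> arrival 0 (sol 0) \<le> 5"
    proof (intro notI)
      assume "sol 0 5 \<noteq> 0" "arrival 0 (sol 0) \<le> 5"
      then show False using path_arrival[OF P0, of 5] by simp
    qed
    then have "arrival 0 (sol 0) \<ge> 6" by simp
    moreover have "arrival 5 (sol 1) = 4" using A1_arr[OF P1 A1] .
    ultimately show ?thesis by (simp add: flow2)
  qed
qed

theorem theorem4:
  shows "\<exists>(V :: nat set) E M s t.
     mapf_instance V E M s t \<and> P_solvable V E M s t \<and>
     (\<forall>prec sol. priority_ordering M prec \<longrightarrow> consistent V E M s t prec sol \<longrightarrow>
        flowtime M t sol > min_flowtime V E M s t)"
proof (intro exI conjI allI impI)
  show "mapf_instance GV GE 2 Gs Gt" by (rule inst)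
  show "P_solvable GV GE 2 Gs Gt" by (rule psolv)
  fix prec sol assume "priority_ordering 2 prec" "consistent GV GE 2 Gs Gt prec sol"
  then show "flowtime 2 Gt sol > min_flowtime GV GE 2 Gs Gt"
    using main_bound[of prec sol] minflow by simp
qed

end
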